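(* Let $\mathbb E$ be a finite-dimensional Euclidean space, let $\lambda\in[0,1]$ be fixed, and for $j=1,2$ let $B_j\subset\mathbb E$ be such that the reflector $R_{B_j}$ is pointwise almost nonexpansive with violation $\tilde\epsilon_j$ at all points of $\Lambda_j$ on $U_j$ (where $\Lambda_j,U_j\subset\mathbb E$). Suppose $R_{B_2}\Lambda_2\subseteq\Lambda_1$ and $R_{B_2}U_2\subseteq U_1$. Then the relaxed Douglas–Rachford mapping $$T=\tfrac{\lambda}{2}(R_{B_1}R_{B_2}+\mathrm{Id})+(1-\lambda)P_{B_2}$$ is pointwise almost $\alpha$-firmly nonexpansive at all $y\in\Lambda_2$ on $U_2$ with constant $\alpha=1/2$ and violation $$\tilde\epsilon=\tfrac12\Big[\big(\lambda\sqrt{1+\tilde\epsilon_1}+1-\lambda\big)^2(1+\tilde\epsilon_2)-1\Big].$$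
   Context: For a nonempty closed set $B$, $P_Bx=\operatorname{argmin}_{b\in B}\|b-x\|$ (set-valued in general), $R_B=2P_B-\mathrm{Id}$. For set-valued maps, composition is $TQx=\bigcup_{z\in Qx}Tz$, and sums and scalar multiples are taken elementwise; for a set $S$, $TS=\bigcup_{a\in S}Ta$. A map $T$ is pointwise almost nonexpansive at $y$ on $U$ with violation $\epsilon\in[0,1)$ if $\|x^+-y^+\|\le\sqrt{1+\epsilon}\|x-y\|$ for all $x\in U$, $x^+\in Tx$, $y^+\in Ty$. It is pointwise almost $\alpha$-firmly nonexpansive at $y$ on $U$ with constant $\alpha\in(0,1)$ and violation $\epsilon\in[0,1)$ if $\|x^+-y^+\|^2\le(1+\epsilon)\|x-y\|^2-\frac{1-\alpha}{\alpha}\|(x^+-x)-(y^+-y)\|^2$ for all $x\in U$, $x^+\in Tx$, $y^+\in Ty$. *)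

theory Defs
  imports "HOL-Analysis.Analysis"
begin

definition proj :: "'a::real_normed_vector set \<Rightarrow> 'a \<Rightarrow> 'a set" where
  "proj B x = {b \<in> B. \<forall>c\<in>B. norm (b - x) \<le> norm (c - x)}"

definition reflector :: "'a::real_normed_vector set \<Rightarrow> 'a \<Rightarrow> 'a set" where
  "reflector B x = (\<lambda>p. 2 *\<^sub>R p - x) ` proj B x"

definition svcomp :: "('a \<Rightarrow> 'a set) \<Rightarrow> ('a \<Rightarrow> 'a set) \<Rightarrow> 'a \<Rightarrow> 'a set" where
  "svcomp T Q x = (\<Union>z\<in>Q x. T z)"

definition svimage :: "('a \<Rightarrow> 'a set) \<Rightarrow> 'a set \<Rightarrow> 'a set" where
  "svimage T S = (\<Union>a\<in>S. T a)"

definition rdr :: "real \<Rightarrow> 'a::real_normed_vector set \<Rightarrow> 'a set \<Rightarrow> 'a \<Rightarrow> 'a set" where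
  "rdr lam B1 B2 x = {(lam / 2) *\<^sub>R (a + x) + (1 - lam) *\<^sub>R p | a p.
      a \<in> svcomp (reflector B1) (reflector B2) x \<and> p \<in> proj B2 x}"

definition almost_nonexp :: "('a::real_normed_vector \<Rightarrow> 'a set) \<Rightarrow> 'a \<Rightarrow> 'a set \<Rightarrow> real \<Rightarrow> bool" where
  "almost_nonexp T y U eps \<longleftrightarrow>
     (\<forall>x\<in>U. \<forall>xp\<in>T x. \<forall>yp\<in>T y. norm (xp - yp) \<le> sqrt (1 + eps) * norm (x - y))"

definition almost_afne :: "('a::real_normed_vector \<Rightarrow> 'a set) \<Rightarrow> 'a \<Rightarrow> 'a set \<Rightarrow> real \<Rightarrow> real \<Rightarrow> bool" where
  "almost_afne T y U alpha eps \<longleftrightarrow>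
     (\<forall>x\<in>U. \<forall>xp\<in>T x. \<forall>yp\<in>T y.
        (norm (xp - yp))\<^sup>2 \<le> (1 + eps) * (norm (x - y))\<^sup>2
          - (1 - alpha) / alpha * (norm ((xp - x) - (yp - y)))\<^sup>2)"

end

theory Submission
  imports Defs
begin

lemma ident:
  fixes u v :: "'a::real_inner"
  shows "(norm v)\<^sup>2 + (norm (v - u))\<^sup>2 = ((norm u)\<^sup>2 + (norm (2 *\<^sub>R v - u))\<^sup>2) / 2"
  by (simp add: power2_norm_eq_inner inner_simps algebra_simps)

theorem lemma3:
  fixes B1 B2 \<Lambda>1 \<Lambda>2 U1 U2 :: "'a::euclidean_space set"
    and lam e1 e2 :: real
  assumes lam: "0 \<le> lam" "lam \<le> 1"
    and B1: "closed B1" "B1 \<noteq> {}"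
    and B2: "closed B2" "B2 \<noteq> {}"
    and e1: "0 \<le> e1" "e1 < 1"
    and e2: "0 \<le> e2" "e2 < 1"
    and R1: "\<forall>y\<in>\<Lambda>1. almost_nonexp (reflector B1) y U1 e1"
    and R2: "\<forall>y\<in>\<Lambda>2. almost_nonexp (reflector B2) y U2 e2"
    and incl\<Lambda>: "svimage (reflector B2) \<Lambda>2 \<subseteq> \<Lambda>1"
    and inclU: "svimage (reflector B2) U2 \<subseteq> U1"
  shows "\<forall>y\<in>\<Lambda>2. almost_afne (rdr lam B1 B2) y U2 (1/2)
           ((1/2) * ((lam * sqrt (1 + e1) + 1 - lam)\<^sup>2 * (1 + e2) - 1))"
proof
  fix y assume y: "y \<in> \<Lambda>2"
  show "almost_afne (rdr lam B1 B2) y U2 (1/2)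
           ((1/2) * ((lam * sqrt (1 + e1) + 1 - lam)\<^sup>2 * (1 + e2) - 1))"
    unfolding almost_afne_def
  proof (intro ballI)
    fix x xp yp assume x: "x \<in> U2" and xp: "xp \<in> rdr lam B1 B2 x" and yp: "yp \<in> rdr lam B1 B2 y"
    obtain a p where xpd: "xp = (lam / 2) *\<^sub>R (a + x) + (1 - lam) *\<^sub>R p"
      and a: "a \<in> svcomp (reflector B1) (reflector B2) x" and p: "p \<in> proj B2 x"
      using xp unfolding rdr_def by blast
    obtain a' p' where ypd: "yp = (lam / 2) *\<^sub>R (a' + y) + (1 - lam) *\<^sub>R p'"
      and a': "a' \<in> svcomp (reflector B1) (reflector B2) y" and p': "p' \<in> proj B2 y"
      using yp unfolding rdr_def by blast
    obtain z where z: "z \<in> reflector B2 x" and az: "a \<in> reflector B1 z"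
      using a unfolding svcomp_def by blast
    obtain z' where z': "z' \<in> reflector B2 y" and az': "a' \<in> reflector B1 z'"
      using a' unfolding svcomp_def by blast
    define r where "r = 2 *\<^sub>R p - x"
    define r' where "r' = 2 *\<^sub>R p' - y"
    have r: "r \<in> reflector B2 x" using p unfolding r_def reflector_def by blast
    have r': "r' \<in> reflector B2 y" using p' unfolding r'_def reflector_def by blast
    have zU: "z \<in> U1" using z x inclU unfolding svimage_def by blast
    have z\<Lambda>: "z' \<in> \<Lambda>1" using z' y incl\<Lambda> unfolding svimage_def by blast
    define u where "u = x - y"
    define c where "c = sqrt (1 + e2)"
    define d where "d = sqrt (1 + e1)"
    have c0: "c \<ge> 0" and d0: "d \<ge> 0" using e1 e2 by (auto simp: c_def d_def)
    have hr: "norm (r - r') \<le> c * norm u"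
      using R2 y x r r' unfolding almost_nonexp_def c_def u_def by blast
    have hz: "norm (z - z') \<le> c * norm u"
      using R2 y x z z' unfolding almost_nonexp_def c_def u_def by blast
    have ha0: "norm (a - a') \<le> d * norm (z - z')"
      using R1 z\<Lambda> zU az az' unfolding almost_nonexp_def d_def by blast
    have ha: "norm (a - a') \<le> d * (c * norm u)"
      using ha0 hz d0 by (meson mult_left_mono order_trans)
    have seq: "2 *\<^sub>R (xp - yp) - u = lam *\<^sub>R (a - a') + (1 - lam) *\<^sub>R (r - r')"
      unfolding xpd ypd u_def r_def r'_def by (simp add: algebra_simps)
    have "norm (2 *\<^sub>R (xp - yp) - u) \<le> lam * norm (a - a') + (1 - lam) * norm (r - r')"
      unfolding seq using lam
      by (metis (no_types, lifting) abs_of_nonneg diff_ge_0_iff_ge norm_scaleR norm_triangle_ineq)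
    also have "\<dots> \<le> lam * (d * (c * norm u)) + (1 - lam) * (c * norm u)"
      using lam ha hr by (intro add_mono mult_left_mono) auto
    also have "\<dots> = (lam * d + 1 - lam) * c * norm u" by (simp add: algebra_simps)
    finally have hs: "norm (2 *\<^sub>R (xp - yp) - u) \<le> (lam * d + 1 - lam) * c * norm u" .
    have k0: "0 \<le> (lam * d + 1 - lam) * c * norm u" using lam c0 d0 by (intro mult_nonneg_nonneg) (auto simp: algebra_simps intro: add_increasing2)
    have hs2: "(norm (2 *\<^sub>R (xp - yp) - u))\<^sup>2 \<le> ((lam * d + 1 - lam) * c * norm u)\<^sup>2"
      using hs by (simp add: power_mono)
    have c2: "c\<^sup>2 = 1 + e2" using e2 by (simp add: c_def)
    have eq: "((lam * d + 1 - lam) * c * norm u)\<^sup>2 = (lam * d + 1 - lam)\<^sup>2 * (1 + e2) * (norm u)\<^sup>2"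
      by (simp add: power_mult_distrib c2)
    have "(xp - x) - (yp - y) = (xp - yp) - u" by (simp add: u_def algebra_simps)
    then have "(norm (xp - yp))\<^sup>2 + (norm ((xp - x) - (yp - y)))\<^sup>2
        = ((norm u)\<^sup>2 + (norm (2 *\<^sub>R (xp - yp) - u))\<^sup>2) / 2"
      using ident by metis
    then show "(norm (xp - yp))\<^sup>2 \<le> (1 + (1/2) * ((lam * sqrt (1 + e1) + 1 - lam)\<^sup>2 * (1 + e2) - 1)) * (norm (x - y))\<^sup>2
          - (1 - 1/2) / (1/2) * (norm ((xp - x) - (yp - y)))\<^sup>2"
      using hs2 eq unfolding u_def d_def by (simp add: algebra_simps)
  qed
qed

end
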